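(* Fix an income $y>0$ and prices $0\le p_1'<p_1''\le y$, and consider an increase in the price of good 1 from $p_1'$ to $p_1''$. Suppose Assumptions 1 (with $U_0$ strictly increasing), 2, 3 and 4 hold. Let $\overline{p_1}$ be the minimum price $p_1\in[0,y]$ with $q_1(p_1,y)=0$. Then the equivalent variation $S^{EV}$ across the population has distribution $\Pr\{S^{EV}=0\}=1-q_1(p_1',y)$, $\Pr\{S^{EV}=\overline{p_1}-p_1'\}=q_1(p_1',y)-q_1(p_1'',y)$, $\Pr\{S^{EV}=p_1''-p_1'\}=q_1(p_1'',y)$. If instead Assumption 3 does not hold (Assumptions 1 with $U_0$ strictly increasing, 2 and 4 hold), then the consumers who switch from good 1 at price $p_1'$ to good 0 at price $p_1''$ (a proportion $q_1(p_1',y)-q_1(p_1'',y)$ of the population) have equivalent variation satisfying $y-p_1'\ge S^{EV}\ge \overline{p_1}-p_1'$.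
   Context: Two goods, $0$ (price $0$) and $1$ (price $p_1\ge0$). All consumers have common income $y>0$, choose one good and spend the remainder on a numeraire. All consumers share utility functions $U_0:(0,\infty)\to[0,\infty)$ (utility of good 0 with numeraire amount $z$) and $U_1:[0,\infty)\to[0,\infty)$ (utility of good 1 with residual numeraire $z$). Each consumer $i$ has an attention-price threshold $t_i\in(0,\infty]$; $G$ is the CDF of thresholds in the population. Consumer $i$ considers good 1 at price $p_1$ iff $p_1<t_i$ (good 0 is always considered), and chooses good 1 iff she considers it and $U_0(y)<U_1(y-p_1)$. Hence the observed choice probability is $q_{1}(p_{1},y)=\mathbb{1}\{U_{0}(y)<U_{1}(y-p_{1})\}\,(1-G(p_{1}))$. Assumption 1: (i) $U_0$ is (here strictly) increasing, $U_1$ is continuous and strictly increasing; (ii) for every $y>0$ there is $\bar p_1\in[0,y]$ with $U_0(y)\ge U_1(y-\bar p_1)$. Assumption 2: $G(0)=0$. Assumption 3: $G(t)<1$ for all finite $t$ (a positive mass of consumers pays attention at every price). Assumption 4: $q_1(p_1,y)$ is observed for all $p_1\in[p_1',y]$. Equivalent variation of consumer $i$ for the price increase from $p_1'$ to $p_1''$: if $p_1''<t_i$ (full attention), $S^{EV}$ is the solution $S$ of $\max\{U_0(y-S),U_1(y-S-p_1')\}=\max\{U_0(y),U_1(y-p_1'')\}$; if $p_1'<t_i\le p_1''$ (partial attention), it solves $\max\{U_0(y-S),U_1(y-S-p_1')\}=U_0(y)$; if $p_1'\ge t_i$ (no attention), it solves $U_0(y-S)=U_0(y)$. Probabilities $\Pr$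 refer to population proportions under $G$. *)

theory Defs
  imports "HOL-Probability.Probability"
begin

text \<open>Population CDF of attention thresholds: consumers are the points of the
  probability space M, consumer i has threshold t i in (0, infinity] (an extended real).\<close>
definition cdfG :: "'a measure \<Rightarrow> ('a \<Rightarrow> ereal) \<Rightarrow> real \<Rightarrow> real" where
  "cdfG M t p = measure M {i \<in> space M. t i \<le> ereal p}"

definition q1 :: "(real \<Rightarrow> real) \<Rightarrow> (real \<Rightarrow> real) \<Rightarrow> (real \<Rightarrow> real) \<Rightarrow> real \<Rightarrow> real \<Rightarrow> real" where
  "q1 U0 U1 G p y = (if U0 y < U1 (y - p) then 1 else 0) * (1 - G p)"

text \<open>Left-hand side max{U0(y-S), U1(y-S-p1')} of the EV equation; the U1 term is only
  present where its argument lies in the domain [0,\<infinity>) of U1.\<close>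
definition ev_lhs :: "(real \<Rightarrow> real) \<Rightarrow> (real \<Rightarrow> real) \<Rightarrow> real \<Rightarrow> real \<Rightarrow> real \<Rightarrow> real" where
  "ev_lhs U0 U1 y p1' S =
     (if 0 \<le> y - S - p1' then max (U0 (y - S)) (U1 (y - S - p1')) else U0 (y - S))"

text \<open>Equivalent variation of a consumer with threshold ti for the price increase p1' to p1''
  (S ranges over values with y - S > 0, the domain of U0).\<close>
definition SEV :: "(real \<Rightarrow> real) \<Rightarrow> (real \<Rightarrow> real) \<Rightarrow> real \<Rightarrow> real \<Rightarrow> real \<Rightarrow> ereal \<Rightarrow> real" where
  "SEV U0 U1 y p1' p1'' ti =
     (if ereal p1'' < ti then
        (THE S. 0 < y - S \<and> ev_lhs U0 U1 y p1' S = max (U0 y) (U1 (y - p1'')))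
      else if ereal p1' < ti then
        (THE S. 0 < y - S \<and> ev_lhs U0 U1 y p1' S = U0 y)
      else
        (THE S. 0 < y - S \<and> U0 (y - S) = U0 y))"

definition pbar :: "(real \<Rightarrow> real) \<Rightarrow> (real \<Rightarrow> real) \<Rightarrow> (real \<Rightarrow> real) \<Rightarrow> real \<Rightarrow> real" where
  "pbar U0 U1 G y = (LEAST p. 0 \<le> p \<and> p \<le> y \<and> q1 U0 U1 G p y = 0)"

end

theory Submission
  imports Defs
begin

theorem theorem2:
  fixes M :: "'a measure" and t :: "'a \<Rightarrow> ereal"
    and U0 U1 :: "real \<Rightarrow> real" and y p1' p1'' :: real
  assumes prob: "prob_space M"
    and t_meas: "t \<in> borel_measurable M"
    and t_pos: "\<forall>i\<in>space M. 0 < t i"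
    and y_pos: "0 < y"
    and prices: "0 \<le> p1'" "p1' < p1''" "p1'' \<le> y"
    and U0_range: "\<forall>z>0. 0 \<le> U0 z"
    and U1_range: "\<forall>z\<ge>0. 0 \<le> U1 z"
    and A1_U0: "strict_mono_on {0<..} U0"
    and A1_U1_cont: "continuous_on {0..} U1"
    and A1_U1_mono: "strict_mono_on {0..} U1"
    and A1_ii: "\<forall>w>0. \<exists>pb\<in>{0..w}. U1 (w - pb) \<le> U0 w"
    and A2: "cdfG M t 0 = 0"
  shows "((\<forall>p. cdfG M t p < 1) \<longrightarrow>
           (\<forall>v. measure M {i \<in> space M. SEV U0 U1 y p1' p1'' (t i) = v} =
                  (if v = 0 then 1 - q1 U0 U1 (cdfG M t) p1' y else 0)
                + (if v = pbar U0 U1 (cdfG M t) y - p1'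
                   then q1 U0 U1 (cdfG M t) p1' y - q1 U0 U1 (cdfG M t) p1'' y else 0)
                + (if v = p1'' - p1' then q1 U0 U1 (cdfG M t) p1'' y else 0)))
       \<and> (measure M {i \<in> space M. (ereal p1' < t i \<and> U0 y < U1 (y - p1'))
                   \<and> \<not> (ereal p1'' < t i \<and> U0 y < U1 (y - p1''))}
           = q1 U0 U1 (cdfG M t) p1' y - q1 U0 U1 (cdfG M t) p1'' y
         \<and> (\<forall>i\<in>space M. (ereal p1' < t i \<and> U0 y < U1 (y - p1'))
                   \<and> \<not> (ereal p1'' < t i \<and> U0 y < U1 (y - p1'')) \<longrightarrow>
              SEV U0 U1 y p1' p1'' (t i) \<le> y - p1'
              \<and> pbar U0 U1 (cdfG M t) y - p1' \<le> SEV U0 U1 y p1' p1'' (t i)))"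
  proof -
  interpret P: prob_space M by (rule prob)
  define G where "G = cdfG M t"
  define L where "L = ev_lhs U0 U1 y p1'"
  have meas_le[measurable]: "\<And>p. {i\<in>space M. t i \<le> ereal p} \<in> sets M" using t_meas by measurable
  have meas_gt[measurable]: "\<And>p. {i\<in>space M. ereal p < t i} \<in> sets M" using t_meas by measurable
  have G_def': "\<And>p. G p = measure M {i\<in>space M. t i \<le> ereal p}" by (simp add: G_def cdfG_def)
  have T_meas: "\<And>p. measure M {i\<in>space M. ereal p < t i} = 1 - G p"
  proof -
    fix p
    have "{i\<in>space M. ereal p < t i} = space M - {i\<in>space M. t i \<le> ereal p}" by auto
    then show "measure M {i\<in>space M. ereal p < t i} = 1 - G p"
      using P.prob_compl[OF meas_le[of p]] G_def' by simp
  qed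
  have U0_less: "\<And>u v. 0 < u \<Longrightarrow> u < v \<Longrightarrow> U0 u < U0 v"
    using A1_U0 by (auto simp: strict_mono_on_def)
  have U1_less: "\<And>u v. 0 \<le> u \<Longrightarrow> u < v \<Longrightarrow> U1 u < U1 v"
    using A1_U1_mono by (auto simp: strict_mono_on_def)
  have U1_le: "\<And>u v. 0 \<le> u \<Longrightarrow> u \<le> v \<Longrightarrow> U1 u \<le> U1 v"
    using U1_less by (metis order_le_less)
  have U10: "U1 0 < U0 y"
  proof -
    have "y/2 > 0" using y_pos by simp
    then obtain pb where pb: "pb \<in> {0..y/2}" "U1 (y/2 - pb) \<le> U0 (y/2)" using A1_ii by blast
    have "U1 0 \<le> U1 (y/2 - pb)" using pb U1_le by auto
    moreover have "U0 (y/2) < U0 y" using U0_less y_pos by auto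
    ultimately show ?thesis using pb by linarith
  qed
  have Ldec: "\<And>S1 S2. S1 < S2 \<Longrightarrow> S2 < y \<Longrightarrow> L S2 < L S1"
  proof -
    fix S1 S2 :: real assume s: "S1 < S2" "S2 < y"
    have u0: "U0 (y - S2) < U0 (y - S1)" using U0_less s by auto
    show "L S2 < L S1"
    proof (cases "0 \<le> y - S2 - p1'")
      case True
      then have "U1 (y - S2 - p1') < U1 (y - S1 - p1')" using U1_less s by auto
      moreover have "0 \<le> y - S1 - p1'" using True s by auto
      ultimately show ?thesis using True u0 s unfolding L_def ev_lhs_def by (auto simp: max_def)
    next
      case False
      then show ?thesis using u0 unfolding L_def ev_lhs_def by (auto simp: max_def)
    qed
  qed
  have Luniq: "\<And>S c. 0 < y - S \<Longrightarrow> L S = c \<Longrightarrow> (THE S. 0 < y - S \<and> L S = c) = S"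
  proof -
    fix S c assume h: "0 < y - S" "L S = c"
    show "(THE S. 0 < y - S \<and> L S = c) = S"
    proof (rule the_equality)
      show "0 < y - S \<and> L S = c" using h by simp
    next
      fix S' assume h': "0 < y - S' \<and> L S' = c"
      show "S' = S"
      proof (rule ccontr)
        assume "S' \<noteq> S"
        then consider "S' < S" | "S < S'" by linarith
        then show False
        proof cases
          case 1 then show ?thesis using Ldec[of S' S] h h' by auto
        next
          case 2 then show ?thesis using Ldec[of S S'] h h' by auto
        qed
      qed
    qed
  qed
  define a where "a \<longleftrightarrow> U0 y < U1 (y - p1')"
  define b where "b \<longleftrightarrow> U0 y < U1 (y - p1'')"
  have ba: "b \<Longrightarrow> a"
  proof -
    assume b
    have "U1 (y - p1'') < U1 (y - p1')" using U1_less prices by auto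
    then show a using \<open>b\<close> unfolding a_def b_def by linarith
  qed
  define sol where "sol = (THE S. 0 < y - S \<and> L S = U0 y)"
  have sol_na: "\<not> a \<Longrightarrow> sol = 0"
  proof -
    assume "\<not> a"
    have "L 0 = U0 y" using \<open>\<not> a\<close> prices unfolding L_def ev_lhs_def a_def by auto
    then show ?thesis unfolding sol_def using Luniq[of 0] y_pos by simp
  qed
  have sol_a: "a \<Longrightarrow> 0 < sol \<and> sol < y - p1' \<and> U1 (y - p1' - sol) = U0 y"
  proof -
    assume a
    have "continuous_on {0..y-p1'} U1" using A1_U1_cont by (rule continuous_on_subset) auto
    then obtain x where x: "0 \<le> x" "x \<le> y - p1'" "U1 x = U0 y"
      using IVT'[of U1 0 "U0 y" "y - p1'"] U10 \<open>a\<close> prices unfolding a_def by force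
    have "x \<noteq> 0" using x U10 by auto
    moreover have "x \<noteq> y - p1'" using x \<open>a\<close> unfolding a_def by auto
    ultimately have x2: "0 < x" "x < y - p1'" using x by auto
    define s where "s = y - p1' - x"
    have "U0 (y - s) < U0 y" using U0_less[of "y - s" y] x2 prices unfolding s_def by auto
    then have "L s = U0 y" using x x2 unfolding L_def ev_lhs_def s_def by (auto simp: max_def)
    then have "sol = s" unfolding sol_def using Luniq[of s] x2 prices unfolding s_def by auto
    then show ?thesis using x x2 unfolding s_def by auto
  qed
  have SEVi: "\<And>i. SEV U0 U1 y p1' p1'' (t i) =
      (if ereal p1'' < t i \<and> b then p1'' - p1' else if ereal p1' < t i then sol else 0)"
  proof -
    fix i
    show "SEV U0 U1 y p1' p1'' (t i) =
      (if ereal p1'' < t i \<and> b then p1'' - p1' else if ereal p1' < t i then sol else 0)"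
    proof (cases "ereal p1'' < t i")
      case True
      have lt: "ereal p1' < t i" using True prices by (meson ereal_less_eq(3) less_imp_le order_le_less_trans)
      show ?thesis
      proof (cases b)
        case True
        have yp: "0 < y - p1''" using True U10 U1_less[of "y - p1''" 0] prices unfolding b_def
          by (cases "y - p1'' = 0") auto
        have "U0 (y - (p1'' - p1')) < U0 y" using U0_less[of "y - (p1'' - p1')" y] yp prices by auto
        then have "L (p1'' - p1') = max (U0 y) (U1 (y - p1''))"
          using True yp unfolding L_def ev_lhs_def b_def by (auto simp: max_def)
        then have "(THE S. 0 < y - S \<and> L S = max (U0 y) (U1 (y - p1''))) = p1'' - p1'"
          using Luniq yp prices by auto
        then show ?thesis using True \<open>ereal p1'' < t i\<close> unfolding SEV_def L_def[symmetric] by simp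
      next
        case False
        then have "max (U0 y) (U1 (y - p1'')) = U0 y" unfolding b_def by auto
        then show ?thesis using False \<open>ereal p1'' < t i\<close> lt unfolding SEV_def L_def[symmetric] sol_def
          by simp
      qed
    next
      case False
      show ?thesis
      proof (cases "ereal p1' < t i")
        case True
        then show ?thesis using False unfolding SEV_def L_def[symmetric] sol_def by simp
      next
        case False2: False
        have "(THE S. 0 < y - S \<and> U0 (y - S) = U0 y) = 0"
        proof (rule the_equality)
          show "0 < y - 0 \<and> U0 (y - 0) = U0 y" using y_pos by simp
        next
          fix S assume h: "0 < y - S \<and> U0 (y - S) = U0 y"
          show "S = 0"
          proof (rule ccontr)
            assume "S \<noteq> 0"
            then consider "S < 0" | "0 < S" by linarith
            then show False
            proof cases
              case 1 then show ?thesis using U0_less[of y "y - S"] h y_pos by auto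
            next
              case 2 then show ?thesis using U0_less[of "y - S" y] h by auto
            qed
          qed
        qed
        then show ?thesis using False False2 unfolding SEV_def by simp
      qed
    qed
  qed
  have gtimp: "\<And>i. ereal p1'' < t i \<Longrightarrow> ereal p1' < t i"
    using prices by (meson ereal_less_eq(3) less_imp_le order_le_less_trans)
  define F where "F = {i\<in>space M. ereal p1'' < t i \<and> b}"
  define A where "A = {i\<in>space M. ereal p1' < t i \<and> a}"
  define W where "W = {i\<in>space M. (ereal p1' < t i \<and> a) \<and> \<not> (ereal p1'' < t i \<and> b)}"
  have F_meas[measurable]: "F \<in> sets M" unfolding F_def by (cases b) auto
  have A_meas[measurable]: "A \<in> sets M" unfolding A_def by (cases a) auto
  have FA: "F \<subseteq> A" unfolding F_def A_def using ba prices
    by auto (meson ereal_less_eq(3) less_imp_le order_le_less_trans)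
  have WAF: "W = A - F" unfolding W_def A_def F_def by auto
  have W_meas[measurable]: "W \<in> sets M" unfolding WAF by auto
  have q1': "q1 U0 U1 G p1' y = (if a then 1 - G p1' else 0)" unfolding q1_def a_def by simp
  have q1'': "q1 U0 U1 G p1'' y = (if b then 1 - G p1'' else 0)" unfolding q1_def b_def by simp
  have mF: "measure M F = q1 U0 U1 G p1'' y" unfolding q1'' F_def using T_meas by (cases b) auto
  have mA: "measure M A = q1 U0 U1 G p1' y" unfolding q1' A_def using T_meas by (cases a) auto
  have mW: "measure M W = q1 U0 U1 G p1' y - q1 U0 U1 G p1'' y"
    unfolding WAF using P.finite_measure_Diff[OF A_meas F_meas FA] mA mF by simp
  define Pq where "Pq p \<longleftrightarrow> 0 \<le> p \<and> p \<le> y \<and> q1 U0 U1 G p y = 0" for p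
  have q1_zero: "\<And>p. q1 U0 U1 G p y = 0 \<longleftrightarrow> \<not> U0 y < U1 (y - p) \<or> G p = 1"
    by (simp add: q1_def)
  have Gmono: "\<And>p p'. p \<le> p' \<Longrightarrow> G p \<le> G p'"
    unfolding G_def' by (rule P.finite_measure_mono) (auto intro: order_trans)
  have Gle1: "\<And>p. G p \<le> 1" unfolding G_def' by simp
  have Gright: "\<And>m. (\<forall>p>m. G p = 1) \<Longrightarrow> G m = 1"
  proof -
    fix m assume h: "\<forall>p>m. G p = 1"
    have null: "{i\<in>space M. ereal (m + 1 / real (Suc n)) < t i} \<in> null_sets M" for n
    proof -
      have "measure M {i\<in>space M. ereal (m + 1 / real (Suc n)) < t i} = 0"
        using T_meas h by simp
      then show ?thesis using P.emeasure_eq_measure by (auto simp: null_sets_def)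
    qed
    have U: "{i\<in>space M. ereal m < t i} = (\<Union>n. {i\<in>space M. ereal (m + 1 / real (Suc n)) < t i})"
    proof (intro equalityI subsetI)
      fix i assume i: "i \<in> {i\<in>space M. ereal m < t i}"
      show "i \<in> (\<Union>n. {i\<in>space M. ereal (m + 1 / real (Suc n)) < t i})"
      proof (cases "t i")
        case (real r)
        then have "0 < r - m" using i by auto
        then obtain n where "inverse (real (Suc n)) < r - m" using reals_Archimedean by blast
        then show ?thesis using i real by (auto simp: field_simps)
      next
        case PInf then show ?thesis using i by auto
      next
        case MInf then show ?thesis using i by auto
      qed
    next
      fix i assume "i \<in> (\<Union>n. {i\<in>space M. ereal (m + 1 / real (Suc n)) < t i})"
      then obtain n where n: "i \<in> space M" "ereal (m + 1 / real (Suc n)) < t i" by auto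
      have "ereal m < ereal (m + 1 / real (Suc n))" by simp
      then show "i \<in> {i\<in>space M. ereal m < t i}" using n using order.strict_trans by blast
    qed
    have "{i\<in>space M. ereal m < t i} \<in> null_sets M" unfolding U using null by blast
    then have "measure M {i\<in>space M. ereal m < t i} = 0" by (rule measure_eq_0_null_sets)
    then show "G m = 1" using T_meas[of m] by simp
  qed
  have Py: "Pq y" unfolding Pq_def using y_pos q1_zero U10 by auto
  define m where "m = Inf (Collect Pq)"
  have bdd: "bdd_below (Collect Pq)" unfolding Pq_def bdd_below_def by auto
  have ne: "Collect Pq \<noteq> {}" using Py by auto
  have m_le: "\<And>p. Pq p \<Longrightarrow> m \<le> p" unfolding m_def using bdd by (simp add: cInf_lower)
  have m0: "0 \<le> m" unfolding m_def using ne by (rule cInf_greatest) (auto simp: Pq_def)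
  have my: "m \<le> y" using m_le Py by auto
  have Pm: "Pq m"
  proof (rule ccontr)
    assume nP: "\<not> Pq m"
    then have c1: "U0 y < U1 (y - m)" and c2: "G m \<noteq> 1" using m0 my q1_zero unfolding Pq_def by auto
    have "continuous_on {0..y-m} U1" using A1_U1_cont by (rule continuous_on_subset) auto
    then obtain x where x: "0 \<le> x" "x \<le> y - m" "U1 x = U0 y"
      using IVT'[of U1 0 "U0 y" "y - m"] U10 c1 my by force
    have "x \<noteq> y - m" using x c1 by auto
    then have xm: "m < y - x" using x by auto
    have "\<forall>p>m. G p = 1"
    proof (intro allI impI)
      fix p assume "m < p"
      then have "Inf (Collect Pq) < min p (y - x)" using xm unfolding m_def by simp
      then have "\<exists>p'\<in>Collect Pq. p' < min p (y - x)" using cInf_less_iff[OF ne bdd] by blast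
      then obtain p' where p': "Pq p'" "p' < min p (y - x)" by blast
      have "U1 x < U1 (y - p')" using U1_less[of x "y - p'"] x p' by auto
      then have "G p' = 1" using p' x q1_zero unfolding Pq_def by auto
      moreover have "G p' \<le> G p" using Gmono p' by auto
      ultimately show "G p = 1" using Gle1[of p] by linarith
    qed
    then show False using Gright c2 by blast
  qed
  have pbar_eq: "pbar U0 U1 G y = m" unfolding pbar_def
    using Pm m_le unfolding Pq_def by (intro Least_equality) auto
  have pbar_a: "a \<Longrightarrow> pbar U0 U1 G y \<le> sol + p1'"
  proof -
    assume a
    have "Pq (sol + p1')" using sol_a[OF \<open>a\<close>] prices q1_zero unfolding Pq_def
      by (auto simp: algebra_simps)
    then show ?thesis using m_le pbar_eq by auto
  qed
  have part2: "measure M W = q1 U0 U1 G p1' y - q1 U0 U1 G p1'' y \<and>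
     (\<forall>i\<in>space M. (ereal p1' < t i \<and> U0 y < U1 (y - p1')) \<and> \<not> (ereal p1'' < t i \<and> U0 y < U1 (y - p1'')) \<longrightarrow>
        SEV U0 U1 y p1' p1'' (t i) \<le> y - p1' \<and> pbar U0 U1 G y - p1' \<le> SEV U0 U1 y p1' p1'' (t i))"
  proof (intro conjI ballI impI)
    show "measure M W = q1 U0 U1 G p1' y - q1 U0 U1 G p1'' y" by (rule mW)
  next
    fix i assume "i \<in> space M" and h: "(ereal p1' < t i \<and> U0 y < U1 (y - p1')) \<and> \<not> (ereal p1'' < t i \<and> U0 y < U1 (y - p1''))"
    then have "a" "SEV U0 U1 y p1' p1'' (t i) = sol" using SEVi[of i] unfolding a_def b_def by auto
    then show "SEV U0 U1 y p1' p1'' (t i) \<le> y - p1'" "pbar U0 U1 G y - p1' \<le> SEV U0 U1 y p1' p1'' (t i)"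
      using sol_a pbar_a by auto
  qed
  have part1: "\<forall>v. measure M {i \<in> space M. SEV U0 U1 y p1' p1'' (t i) = v} =
                  (if v = 0 then 1 - q1 U0 U1 G p1' y else 0)
                + (if v = pbar U0 U1 G y - p1'
                   then q1 U0 U1 G p1' y - q1 U0 U1 G p1'' y else 0)
                + (if v = p1'' - p1' then q1 U0 U1 G p1'' y else 0)"
    if A3: "\<forall>p. G p < 1"
  proof
    fix v
    define Z where "Z = space M - A"
    have Z_meas[measurable]: "Z \<in> sets M" unfolding Z_def by auto
    have mZ: "measure M Z = 1 - q1 U0 U1 G p1' y" unfolding Z_def using P.prob_compl[OF A_meas] mA by simp
    have mid: "(if v = pbar U0 U1 G y - p1' then q1 U0 U1 G p1' y - q1 U0 U1 G p1'' y else 0)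
       = (if v = sol then measure M W else 0)"
    proof (cases a)
      case True
      have "pbar U0 U1 G y \<ge> sol + p1'"
      proof (rule ccontr)
        assume "\<not> ?thesis"
        then have "m < sol + p1'" using pbar_eq by auto
        then have "U1 (y - p1' - sol) < U1 (y - m)" using U1_less[of "y - p1' - sol" "y - m"] sol_a[OF True] by auto
        moreover have "q1 U0 U1 G m y = 0" using Pm unfolding Pq_def by auto
        ultimately show False using q1_zero[of m] A3[rule_format, of m] sol_a[OF True] by auto
      qed
      then have "pbar U0 U1 G y = sol + p1'" using pbar_a[OF True] by auto
      then show ?thesis using mW by auto
    next
      case False
      then have "\<not> b" using ba by auto
      then have "W = {}" "q1 U0 U1 G p1' y = 0" "q1 U0 U1 G p1'' y = 0" using False unfolding W_def q1' q1'' by auto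
      then show ?thesis by simp
    qed
    have seteq: "{i \<in> space M. SEV U0 U1 y p1' p1'' (t i) = v} =
       ((if v = p1'' - p1' then F else {}) \<union> (if v = sol then W else {})) \<union> (if v = 0 then Z else {})"
      unfolding SEVi F_def W_def Z_def A_def using sol_na gtimp ba prices(2) by (cases a; auto split: if_splits)
    have "measure M {i \<in> space M. SEV U0 U1 y p1' p1'' (t i) = v}
       = measure M ((if v = p1'' - p1' then F else {}) \<union> (if v = sol then W else {}))
         + measure M (if v = 0 then Z else {})"
      unfolding seteq by (rule P.finite_measure_Union) (use FA in \<open>auto simp: Z_def WAF\<close>)
    also have "\<dots> = measure M (if v = p1'' - p1' then F else {}) + measure M (if v = sol then W else {})
         + measure M (if v = 0 then Z else {})"
      by (subst P.finite_measure_Union) (auto simp: WAF)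
    finally show "measure M {i \<in> space M. SEV U0 U1 y p1' p1'' (t i) = v} =
                  (if v = 0 then 1 - q1 U0 U1 G p1' y else 0)
                + (if v = pbar U0 U1 G y - p1'
                   then q1 U0 U1 G p1' y - q1 U0 U1 G p1'' y else 0)
                + (if v = p1'' - p1' then q1 U0 U1 G p1'' y else 0)"
      unfolding mid using mF mZ by auto
  qed
  have WW: "W = {i\<in>space M. (ereal p1' < t i \<and> U0 y < U1 (y - p1'))
                   \<and> \<not> (ereal p1'' < t i \<and> U0 y < U1 (y - p1''))}" unfolding W_def a_def b_def ..
  show ?thesis using part1 part2 unfolding G_def WW by blast
qed

end
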